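(* If $\Sigma$ is of type $\mathfrak d_l$ ($l\ge4$) and $\Gamma=Z_{\widetilde M}(\widetilde K)$ (of order 4), then $$d(P_\Gamma)=\begin{cases}\frac12(\psi,\psi)^{-1/2}l^{1/2}, & l\text{ even},\\ \frac{\sqrt2}{4}(\psi,\psi)^{-1/2}(2l-1)^{1/2}, & l\text{ odd}.\end{cases}$$
   Context: Let $(\mathfrak u,\theta,\langle,\rangle)$ be a reduced, compact, irreducible orthogonal involutive Lie algebra ($\mathfrak u=\mathfrak k_0\oplus\mathfrak p_*$ the $\pm1$ eigenspaces of $\theta$), $\widetilde U$ the simply connected group of $\mathfrak u$, $\widetilde K$ the fixed group of the induced involution, $\widetilde M=\widetilde U/\widetilde K$, $\widetilde{\mathrm{Exp}}(X)=\widetilde\exp(X)\widetilde K$ ($X\in\mathfrak p_*$), and $Z_{\widetilde M}(\widetilde K)$ the group of points of $\widetilde M$ fixed by all left translations by $\widetilde K$. $(\cdot,\cdot)$ is the Killing form of $\mathfrak u\otimes\mathbb C$, positive definite on $\mathfrak h_{\mathfrak p_0}=\sqrt{-1}\mathfrak h_{\mathfrak p_*}$ ($\mathfrak h_{\mathfrak p_*}$ maximal abelian in $\mathfrak p_*$); $\Sigma\subset\mathfrak h_{\mathfrak p_0}$ is the restricted root system with simple roots $\gamma_1,\dots,\gamma_l$ and highest root $\psi=\sum d_i\gamma_i$; $e_j$ defined by $(e_j,\gamma_i)=\delta_{ij}/d_j$; $\triangle=\{x:(x,\gamma_i)\ge0\ \forall i,\ (x,\psi)\le1\}$; $P_\Gamma=\{x\in\triangle:(x,e_i)\le\frac12(e_i,e_i)$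 for all $i$ with $\widetilde{\mathrm{Exp}}(\pi\sqrt{-1}e_i)\in\Gamma\}$; $d(P_\Gamma)=\max_{x\in P_\Gamma}(x,x)^{1/2}$. *)

theory Defs
  imports Complex_Main
begin

text \<open>The ambient space
 h_p0 is modelled as the real functions on {1..l} (vectors are functions
 nat => real vanishing outside {1..l}); the Killing form restricted to it
 is c times the standard inner product, c > 0 arbitrary (any D_l root
 system is, up to isometry, of this form for a unique c).\<close>

definition Vsp :: "nat \<Rightarrow> (nat \<Rightarrow> real) set" where
  "Vsp l = {x. \<forall>i. i \<notin> {1..l} \<longrightarrow> x i = 0}"

definition B :: "real \<Rightarrow> nat \<Rightarrow> (nat \<Rightarrow> real) \<Rightarrow> (nat \<Rightarrow> real) \<Rightarrow> real" where
  "B c l x y = c * (\<Sum>i=1..l. x i * y i)"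

definition eps :: "nat \<Rightarrow> nat \<Rightarrow> real" where
  "eps k = (\<lambda>i. if i = k then 1 else 0)"

text \<open>Simple roots of D_l (Bourbaki numbering).\<close>
definition Dgamma :: "nat \<Rightarrow> nat \<Rightarrow> nat \<Rightarrow> real" where
  "Dgamma l i = (if i < l then (\<lambda>k. eps i k - eps (Suc i) k)
                 else (\<lambda>k. eps (l - 1) k + eps l k))"

text \<open>Highest root psi = eps_1 + eps_2 = sum d_i gamma_i.\<close>
definition Dpsi :: "nat \<Rightarrow> real" where
  "Dpsi = (\<lambda>k. eps 1 k + eps 2 k)"

text \<open>Coefficients d_i of psi in the simple roots.\<close>
definition Dd :: "nat \<Rightarrow> nat \<Rightarrow> real" where
  "Dd l i = (if i = 1 \<or> i = l - 1 \<or> i = l then 1 else 2)"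

definition De :: "real \<Rightarrow> nat \<Rightarrow> nat \<Rightarrow> nat \<Rightarrow> real" where
  "De c l j = (THE x. x \<in> Vsp l \<and>
      (\<forall>i\<in>{1..l}. B c l x (Dgamma l i) = (if i = j then 1 / Dd l j else 0)))"

definition Dtriangle :: "real \<Rightarrow> nat \<Rightarrow> (nat \<Rightarrow> real) set" where
  "Dtriangle c l = {x \<in> Vsp l. (\<forall>i\<in>{1..l}. B c l x (Dgamma l i) \<ge> 0) \<and> B c l x Dpsi \<le> 1}"

text \<open>P_Gamma, where J is the set of indices i with Exp(pi sqrt(-1) e_i) in Gamma.\<close>
definition DP :: "real \<Rightarrow> nat \<Rightarrow> nat set \<Rightarrow> (nat \<Rightarrow> real) set" where
  "DP c l J = {x \<in> Dtriangle c l. \<forall>i\<in>J. B c l x (De c l i) \<le> B c l (De c l i) (De c l i) / 2}"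

definition diamP :: "real \<Rightarrow> nat \<Rightarrow> (nat \<Rightarrow> real) set \<Rightarrow> real" where
  "diamP c l P = (GREATEST r. r \<in> (\<lambda>x. sqrt (B c l x x)) ` P)"

end

theory Submission imports Defs begin

lemma sum_last: "l \<ge> 1 \<Longrightarrow> sum f {1..l::nat} = sum f {1..l-1} + (f l::real)"
  by (cases l) (auto simp: sum.cl_ivl_Suc)

lemma sum_delta_r: "(\<Sum>k=a..b. f k * (if k = i then 1 else 0)) = (if a \<le> i \<and> i \<le> (b::nat) then (f i::real) else 0)"
  by (simp add: sum.delta if_distrib cong: if_cong)

lemma B_gamma_lt:
  assumes "1 \<le> i" "i < l"
  shows "B c l x (Dgamma l i) = c * (x i - x (Suc i))"
proof -
  have "B c l x (Dgamma l i) = c * ((\<Sum>k=1..l. x k * eps i k) - (\<Sum>k=1..l. x k * eps (Suc i) k))"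
    using assms by (simp add: B_def Dgamma_def algebra_simps sum_subtractf)
  also have "\<dots> = c * (x i - x (Suc i))"
    using assms by (simp add: eps_def sum_delta_r)
  finally show ?thesis .
qed

lemma B_gamma_l:
  assumes "2 \<le> l"
  shows "B c l x (Dgamma l l) = c * (x (l-1) + x l)"
proof -
  have "B c l x (Dgamma l l) = c * ((\<Sum>k=1..l. x k * eps (l-1) k) + (\<Sum>k=1..l. x k * eps l k))"
    using assms by (simp add: B_def Dgamma_def algebra_simps sum.distrib)
  also have "\<dots> = c * (x (l-1) + x l)"
    using assms by (auto simp add: eps_def sum_delta_r)
  finally show ?thesis .
qed

lemma B_psi:
  assumes "2 \<le> l"
  shows "B c l x Dpsi = c * (x 1 + x 2)"
proof -
  have "B c l x Dpsi = c * ((\<Sum>k=1..l. x k * eps 1 k) + (\<Sum>k=1..l. x k * eps 2 k))"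
    using assms by (simp add: B_def Dpsi_def algebra_simps sum.distrib)
  also have "\<dots> = c * (x 1 + x 2)"
    using assms by (simp add: eps_def sum_delta_r)
  finally show ?thesis .
qed

lemma B_sub: "B c l (\<lambda>k. x k - y k) g = B c l x g - B c l y g"
  by (simp add: B_def algebra_simps sum_subtractf)

lemma De_eq:
  assumes c: "c > 0" and l: "l \<ge> 2" and v: "v \<in> Vsp l"
    and h: "\<forall>i\<in>{1..l}. B c l v (Dgamma l i) = (if i = j then 1 / Dd l j else 0)"
  shows "De c l j = v"
  unfolding De_def
proof (rule the_equality)
  show "v \<in> Vsp l \<and> (\<forall>i\<in>{1..l}. B c l v (Dgamma l i) = (if i = j then 1 / Dd l j else 0))"
    using v h by blast
next
  fix x assume x: "x \<in> Vsp l \<and> (\<forall>i\<in>{1..l}. B c l x (Dgamma l i) = (if i = j then 1 / Dd l j else 0))"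
  define d where "d = (\<lambda>k. x k - v k)"
  have d0: "\<forall>i\<in>{1..l}. B c l d (Dgamma l i) = 0"
    using x h by (simp add: d_def B_sub)
  have step: "d i = d (Suc i)" if "1 \<le> i" "i < l" for i
    using d0[rule_format, of i] that c by (simp add: B_gamma_lt)
  have last: "d (l-1) + d l = 0"
    using d0[rule_format, of l] l c by (simp add: B_gamma_l)
  have all: "d (l - n) = d l" if "n < l" for n
    using that
  proof (induction n)
    case 0 then show ?case by simp
  next
    case (Suc n)
    have "d (l - Suc n) = d (Suc (l - Suc n))"
      using Suc.prems by (intro step) auto
    also have "Suc (l - Suc n) = l - n" using Suc.prems by simp
    finally show ?case using Suc by simp
  qed
  have "d (l-1) = d l" using all[of 1] l by simp
  with last have dl: "d l = 0" by simp
  have "d k = 0" for k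
  proof (cases "k \<in> {1..l}")
    case True
    then have "k = l - (l - k)" "l - k < l" by auto
    then show ?thesis using all[of "l-k"] dl by metis
  next
    case False
    then show ?thesis using x v by (simp add: d_def Vsp_def)
  qed
  then show "x = v" by (auto simp: d_def fun_eq_iff)
qed


definition "e1 c = (\<lambda>k::nat. if k = 1 then 1/c else (0::real))"
definition "eL c l = (\<lambda>k::nat. if 1 \<le> k \<and> k \<le> l then 1/(2*c) else (0::real))"
definition "eL1 c l = (\<lambda>k::nat. if 1 \<le> k \<and> k < l then 1/(2*c) else if k = l then -1/(2*c) else (0::real))"

lemma B_e1: "l \<ge> 1 \<Longrightarrow> c > 0 \<Longrightarrow> B c l x (e1 c) = x 1"
  by (simp add: B_def e1_def sum_delta_r[where i=1, simplified] if_distrib cong: if_cong)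

lemma B_eL: assumes "c > 0" shows "B c l x (eL c l) = (\<Sum>k=1..l. x k) / 2"
proof -
  have "B c l x (eL c l) = c * (\<Sum>k=1..l. x k * (1/(2*c)))"
    unfolding B_def eL_def by (intro arg_cong[where f="(*) c"] sum.cong) auto
  then show ?thesis using assms by (simp add: sum_divide_distrib[symmetric])
qed

lemma B_eL1: "l \<ge> 1 \<Longrightarrow> c > 0 \<Longrightarrow> B c l x (eL1 c l) = ((\<Sum>k=1..l-1. x k) - x l) / 2"
proof -
  assume l: "l \<ge> 1" and c: "c > 0"
  have "B c l x (eL1 c l) = c * ((\<Sum>k=1..l-1. x k * eL1 c l k) + x l * eL1 c l l)"
    unfolding B_def using sum_last[OF l, of "\<lambda>k. x k * eL1 c l k"] by simp
  also have "(\<Sum>k=1..l-1. x k * eL1 c l k) = (\<Sum>k=1..l-1. x k * (1/(2*c)))"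
    unfolding eL1_def by (intro sum.cong) auto
  also have "\<dots> = (\<Sum>k=1..l-1. x k) / (2*c)" by (simp add: sum_divide_distrib[symmetric])
  finally have "B c l x (eL1 c l) = c * ((\<Sum>k=1..l-1. x k) / (2*c) + x l * (-1/(2*c)))"
    by (simp add: eL1_def)
  also have "\<dots> = ((\<Sum>k=1..l-1. x k) - x l) / 2" using c by (simp add: field_simps)
  finally show ?thesis .
qed

lemma Vsp_e: assumes "l \<ge> 1" shows "e1 c \<in> Vsp l" "eL c l \<in> Vsp l" "eL1 c l \<in> Vsp l"
  using assms by (auto simp: Vsp_def e1_def eL_def eL1_def)

lemma Dd_vals: "l \<ge> 4 \<Longrightarrow> Dd l 1 = 1 \<and> Dd l (l-1) = 1 \<and> Dd l l = 1"
  by (simp add: Dd_def)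

lemma De1: assumes "c > 0" "l \<ge> 4" shows "De c l 1 = e1 c"
proof (rule De_eq)
  show "\<forall>i\<in>{1..l}. B c l (e1 c) (Dgamma l i) = (if i = 1 then 1 / Dd l 1 else 0)"
  proof
    fix i assume i: "i \<in> {1..l}"
    show "B c l (e1 c) (Dgamma l i) = (if i = 1 then 1 / Dd l 1 else 0)"
    proof (cases "i < l")
      case True then show ?thesis using i assms by (simp add: B_gamma_lt e1_def Dd_def)
    next
      case False then have "i = l" using i by simp
      then show ?thesis using assms by (simp add: B_gamma_l e1_def Dd_def)
    qed
  qed
qed (use assms Vsp_e in auto)

lemma DeL: assumes "c > 0" "l \<ge> 4" shows "De c l l = eL c l"
proof (rule De_eq)
  show "\<forall>i\<in>{1..l}. B c l (eL c l) (Dgamma l i) = (if i = l then 1 / Dd l l else 0)"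
  proof
    fix i assume i: "i \<in> {1..l}"
    show "B c l (eL c l) (Dgamma l i) = (if i = l then 1 / Dd l l else 0)"
    proof (cases "i < l")
      case True then show ?thesis using i assms by (simp add: B_gamma_lt eL_def Dd_def)
    next
      case False then have "i = l" using i by simp
      then show ?thesis using assms by (simp add: B_gamma_l eL_def Dd_def)
    qed
  qed
qed (use assms Vsp_e in auto)

lemma DeL1: assumes "c > 0" "l \<ge> 4" shows "De c l (l-1) = eL1 c l"
proof (rule De_eq)
  show "\<forall>i\<in>{1..l}. B c l (eL1 c l) (Dgamma l i) = (if i = l-1 then 1 / Dd l (l-1) else 0)"
  proof
    fix i assume i: "i \<in> {1..l}"
    show "B c l (eL1 c l) (Dgamma l i) = (if i = l-1 then 1 / Dd l (l-1) else 0)"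
    proof (cases "i < l")
      case True then show ?thesis using i assms by (auto simp add: B_gamma_lt eL1_def Dd_def)
    next
      case False then have "i = l" using i by simp
      then show ?thesis using assms by (auto simp add: B_gamma_l eL1_def Dd_def)
    qed
  qed
qed (use assms Vsp_e in auto)


lemma dist_even:
  assumes "finite A" "\<forall>i\<in>A. 0 \<le> z i \<and> z i \<le> (2::real)"
  shows "\<exists>p::int. \<bar>sum z A - 2 * of_int p\<bar> \<le> (\<Sum>i\<in>A. z i * (2 - z i))"
  using assms
proof (induction A rule: finite_induct)
  case empty then show ?case by (intro exI[of _ 0]) simp
next
  case (insert a A)
  then obtain p :: int where p: "\<bar>sum z A - 2 * of_int p\<bar> \<le> (\<Sum>i\<in>A. z i * (2 - z i))" by auto
  have za: "0 \<le> z a" "z a \<le> 2" using insert.prems by auto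
  have s1: "sum z (insert a A) = z a + sum z A" "(\<Sum>i\<in>insert a A. z i * (2 - z i)) = z a * (2 - z a) + (\<Sum>i\<in>A. z i * (2 - z i))"
    using insert.hyps by auto
  from p have p': "sum z A - 2 * of_int p \<le> (\<Sum>i\<in>A. z i * (2 - z i))" "-(sum z A - 2 * of_int p) \<le> (\<Sum>i\<in>A. z i * (2 - z i))"
    by (auto simp: abs_le_iff)
  show ?case
  proof (cases "z a \<le> 1")
    case True
    have "z a * (2 - z a) - z a = z a * (1 - z a)" by (simp add: algebra_simps)
    moreover have "z a * (1 - z a) \<ge> 0" using True za by simp
    ultimately have "z a \<le> z a * (2 - z a)" by linarith
    then show ?thesis using p' za unfolding s1 by (intro exI[of _ p]) (simp add: abs_le_iff)
  next
    case False
    have "z a * (2 - z a) - (2 - z a) = (z a - 1) * (2 - z a)" by (simp add: algebra_simps)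
    moreover have "(z a - 1) * (2 - z a) \<ge> 0" using False za by simp
    ultimately have "2 - z a \<le> z a * (2 - z a)" by linarith
    then show ?thesis using p' za unfolding s1 by (intro exI[of _ "p+1"]) (simp add: abs_le_iff)
  qed
qed

lemma chain:
  assumes "\<And>i. 1 \<le> i \<Longrightarrow> i < l \<Longrightarrow> x (Suc i) \<le> (x i::real)"
  shows "1 \<le> i \<Longrightarrow> i \<le> j \<Longrightarrow> j \<le> l \<Longrightarrow> x j \<le> x i"
proof (induction j)
  case 0 then show ?case by simp
next
  case (Suc j)
  show ?case
  proof (cases "i = Suc j")
    case True then show ?thesis by simp
  next
    case False
    then have "x j \<le> x i" using Suc by simp
    moreover have "x (Suc j) \<le> x j" using Suc False by (intro assms) auto
    ultimately show ?thesis by simp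
  qed
qed


lemma B_eL_self: "c > 0 \<Longrightarrow> B c l (eL c l) (eL c l) = real l / (4*c)"
proof -
  assume c: "c > 0"
  have "(\<Sum>k=1..l. eL c l k) = (\<Sum>k=1..l. 1/(2*c))" unfolding eL_def by (intro sum.cong) auto
  then show ?thesis using c by (simp add: B_eL)
qed

lemma B_eL1_self: "l \<ge> 1 \<Longrightarrow> c > 0 \<Longrightarrow> B c l (eL1 c l) (eL1 c l) = real l / (4*c)"
proof -
  assume c: "c > 0" and l: "l \<ge> 1"
  have "(\<Sum>k=1..l-1. eL1 c l k) = (\<Sum>k=1..l-1. 1/(2*c))" unfolding eL1_def by (intro sum.cong) auto
  then have "B c l (eL1 c l) (eL1 c l) = (real (l-1) / (2*c) + 1/(2*c)) / 2"
    unfolding B_eL1[OF l c] using c l by (simp add: eL1_def)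
  also have "\<dots> = real l / (4*c)" using l c by (simp add: of_nat_diff field_simps)
  finally show ?thesis .
qed

lemma upper:
  assumes c: "c > 0" and l: "l \<ge> 4" and x: "x \<in> DP c l {1, l-1, l}"
  shows "16 * c * B c l x x \<le> (if even l then 2 * real l else 2 * real l - 1)"
proof -
  have V: "x \<in> Vsp l" and g: "\<forall>i\<in>{1..l}. B c l x (Dgamma l i) \<ge> 0"
    and h1: "B c l x (De c l 1) \<le> B c l (De c l 1) (De c l 1) / 2"
    and hL: "B c l x (De c l l) \<le> B c l (De c l l) (De c l l) / 2"
    and hL1: "B c l x (De c l (l-1)) \<le> B c l (De c l (l-1)) (De c l (l-1)) / 2"
    using x by (auto simp: DP_def Dtriangle_def)
  have x1: "x 1 \<le> 1/(2*c)"
  proof -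
    have l1: "l \<ge> 1" using l by simp
    show ?thesis using h1 c unfolding De1[OF c l] B_e1[OF l1 c] by (simp add: e1_def)
  qed
  have sL: "(\<Sum>k=1..l. x k) \<le> real l / (4*c)"
    using hL c l unfolding DeL[OF c l] B_eL_self[OF c] B_eL[OF c, where x=x] by simp
  have sL1: "(\<Sum>k=1..l-1. x k) - x l \<le> real l / (4*c)"
  proof -
    have l1: "l \<ge> 1" using l by simp
    show ?thesis using hL1 c unfolding DeL1[OF c l] B_eL1_self[OF l1 c] B_eL1[OF l1 c, where x=x] by simp
  qed
  have mono: "x (Suc i) \<le> x i" if "1 \<le> i" "i < l" for i
    using g[rule_format, of i] that c by (simp add: B_gamma_lt zero_le_mult_iff)
  have last: "x (l-1) + x l \<ge> 0"
    using g[rule_format, of l] l c by (simp add: B_gamma_l zero_le_mult_iff)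
  have ll: "x l \<le> x (l-1)" using mono[of "l-1"] l by simp
  have bnd: "\<bar>x i\<bar> \<le> 1/(2*c)" if "i \<in> {1..l}" for i
  proof -
    have "x i \<le> x 1" using chain[where l=l and x=x, OF mono, of 1 i] that by auto
    moreover have "\<bar>x l\<bar> \<le> x (l-1)" using last ll by linarith
    moreover have "x (l-1) \<le> x i" if "i < l" using chain[where l=l and x=x, OF mono, of i "l-1"] that \<open>i \<in> {1..l}\<close> by auto
    moreover have "x (l-1) \<le> x 1" using chain[where l=l and x=x, OF mono, of 1 "l-1"] l by auto
    ultimately show ?thesis using x1 that by (cases "i = l") auto
  qed
  have pos: "x i \<ge> 0" if "1 \<le> i" "i < l" for i
  proof -
    have "x (l-1) \<le> x i" using chain[where l=l and x=x, OF mono, of i "l-1"] that by auto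
    then show ?thesis using last ll by linarith
  qed
  have sabs: "(\<Sum>k=1..l. \<bar>x k\<bar>) \<le> real l / (4*c)"
  proof -
    have "(\<Sum>k=1..l. \<bar>x k\<bar>) = (\<Sum>k=1..l-1. \<bar>x k\<bar>) + \<bar>x l\<bar>" using l by (intro sum_last) simp
    also have "(\<Sum>k=1..l-1. \<bar>x k\<bar>) = (\<Sum>k=1..l-1. x k)" using pos by (intro sum.cong) auto
    finally have e: "(\<Sum>k=1..l. \<bar>x k\<bar>) = (\<Sum>k=1..l-1. x k) + \<bar>x l\<bar>" .
    have "(\<Sum>k=1..l. x k) = (\<Sum>k=1..l-1. x k) + x l" using l by (intro sum_last) simp
    then show ?thesis using e sL sL1 by (cases "x l \<ge> 0") auto
  qed
  define z where "z k = 4 * c * \<bar>x k\<bar>" for k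
  have z02: "\<forall>i\<in>{1..l}. 0 \<le> z i \<and> z i \<le> 2"
  proof
    fix i assume i: "i \<in> {1..l}"
    have "4 * c * \<bar>x i\<bar> \<le> 4 * c * (1/(2*c))" using bnd[OF i] c by (intro mult_left_mono) auto
    then show "0 \<le> z i \<and> z i \<le> 2" using c by (simp add: z_def)
  qed
  have sz: "sum z {1..l} \<le> real l"
  proof -
    have "sum z {1..l} = 4 * c * (\<Sum>k=1..l. \<bar>x k\<bar>)" by (simp add: z_def sum_distrib_left)
    also have "\<dots> \<le> 4 * c * (real l / (4*c))" using sabs c by (intro mult_left_mono) auto
    finally show ?thesis using c by simp
  qed
  obtain p :: int where p: "\<bar>sum z {1..l} - 2 * of_int p\<bar> \<le> (\<Sum>i=1..l. z i * (2 - z i))"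
    using dist_even[OF _ z02] by auto
  have zz: "16 * c * B c l x x = (\<Sum>i=1..l. z i * z i)"
  proof -
    have "z i * z i = 16 * c * (c * (x i * x i))" for i
    proof -
      have "z i * z i = (4*c)*(4*c)*(\<bar>x i\<bar>*\<bar>x i\<bar>)" by (simp add: z_def mult_ac)
      also have "\<bar>x i\<bar>*\<bar>x i\<bar> = x i * x i" by (rule abs_mult_self_eq)
      finally show ?thesis by simp
    qed
    then show ?thesis by (simp add: B_def sum_distrib_left)
  qed
  also have "\<dots> = 2 * sum z {1..l} - (\<Sum>i=1..l. z i * (2 - z i))"
    by (simp add: algebra_simps sum_subtractf sum_distrib_left)
  finally have main: "16 * c * B c l x x = 2 * sum z {1..l} - (\<Sum>i=1..l. z i * (2 - z i))" .
  have nn: "(\<Sum>i=1..l. z i * (2 - z i)) \<ge> 0" using z02 by (intro sum_nonneg) auto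
  show ?thesis
  proof (cases "even l")
    case True then show ?thesis using main nn sz by simp
  next
    case False
    then have "2 * p \<noteq> int l" by presburger
    then have "2 * p \<le> int l - 1 \<or> 2 * p \<ge> int l + 1" by linarith
    then have "real_of_int (2 * p) \<le> real_of_int (int l - 1) \<or> real_of_int (2 * p) \<ge> real_of_int (int l + 1)"
      by (simp only: of_int_le_iff)
    then have "2 * of_int p \<le> real l - 1 \<or> 2 * of_int p \<ge> real l + 1"
      by simp
    then show ?thesis using main p sz False by (auto simp: abs_le_iff)
  qed
qed


lemma sum_w:
  assumes "m < n"
  shows "(\<Sum>k=1..n. (if 1 \<le> k \<and> k \<le> m then a else if k = Suc m then b else (0::real))) = real m * a + b"
  using assms
proof (induction n)
  case 0 then show ?case by simp
next
  case (Suc n)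
  show ?case
  proof (cases "m < n")
    case True
    then show ?thesis using Suc by (simp add: sum.cl_ivl_Suc)
  next
    case False
    then have n: "n = m" using Suc.prems by simp
    have "(\<Sum>k=1..m. (if 1 \<le> k \<and> k \<le> m then a else if k = Suc m then b else (0::real))) = (\<Sum>k=1..m. a)"
      by (intro sum.cong) auto
    then show ?thesis using n by (simp add: sum.cl_ivl_Suc)
  qed
qed

definition "wit c m b = (\<lambda>k::nat. if 1 \<le> k \<and> k \<le> m then 1/(2*c) else if k = Suc m then b else (0::real))"

lemma wit_in:
  assumes c: "c > 0" and l: "l \<ge> 4" and m: "2 \<le> m" "Suc m < l" and b: "0 \<le> b" "b \<le> 1/(2*c)"
    and s: "real m / (2*c) + b \<le> real l / (4*c)"
  shows "wit c m b \<in> DP c l {1, l-1, l}"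
proof -
  let ?w = "wit c m b"
  have l1: "l \<ge> 1" and l2: "l \<ge> 2" using l by auto
  have V: "?w \<in> Vsp l" using m by (auto simp: Vsp_def wit_def)
  have nn: "?w k \<ge> 0" for k using b c by (simp add: wit_def)
  have dec: "?w (Suc i) \<le> ?w i" if "1 \<le> i" for i using b c that by (auto simp: wit_def)
  have g: "\<forall>i\<in>{1..l}. B c l ?w (Dgamma l i) \<ge> 0"
  proof
    fix i assume i: "i \<in> {1..l}"
    show "B c l ?w (Dgamma l i) \<ge> 0"
    proof (cases "i < l")
      case True then show ?thesis using i c dec[of i] by (simp add: B_gamma_lt)
    next
      case False then have "i = l" using i by simp
      then show ?thesis using c nn[of "l-1"] nn[of l] l2 by (simp add: B_gamma_l)
    qed
  qed
  have w12: "?w 1 = 1/(2*c)" "?w 2 = 1/(2*c)" using m by (auto simp: wit_def)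
  have psi: "B c l ?w Dpsi \<le> 1" using c l2 w12 by (simp add: B_psi)
  have sumall: "(\<Sum>k=1..l. ?w k) = real m / (2*c) + b"
    unfolding wit_def using sum_w[of m l "1/(2*c)" b] m by simp
  have sumall1: "(\<Sum>k=1..l-1. ?w k) = real m / (2*c) + b"
    unfolding wit_def using sum_w[of m "l-1" "1/(2*c)" b] m by simp
  have wl: "?w l = 0" using m by (simp add: wit_def)
  have h1: "B c l ?w (De c l 1) \<le> B c l (De c l 1) (De c l 1) / 2"
    unfolding De1[OF c l] B_e1[OF l1 c] using w12 c by (simp add: e1_def)
  have hL: "B c l ?w (De c l l) \<le> B c l (De c l l) (De c l l) / 2"
    unfolding DeL[OF c l] B_eL_self[OF c] B_eL[OF c, where x="?w"] sumall using s c by (simp add: field_simps)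
  have hL1: "B c l ?w (De c l (l-1)) \<le> B c l (De c l (l-1)) (De c l (l-1)) / 2"
    unfolding DeL1[OF c l] B_eL1_self[OF l1 c] B_eL1[OF l1 c, where x="?w"] sumall1 wl using s c by (simp add: field_simps)
  show ?thesis using V g psi h1 hL hL1 by (simp add: DP_def Dtriangle_def)
qed

lemma wit_B:
  assumes "Suc m < l"
  shows "B c l (wit c m b) (wit c m b) = c * (real m / (4*c*c) + b*b)"
proof -
  have "(\<Sum>k=1..l. wit c m b k * wit c m b k) = (\<Sum>k=1..l. (if 1 \<le> k \<and> k \<le> m then 1/(2*c) * (1/(2*c)) else if k = Suc m then b*b else (0::real)))"
    unfolding wit_def by (intro sum.cong) auto
  also have "\<dots> = real m * (1/(2*c) * (1/(2*c))) + b*b" using assms by (intro sum_w) simp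
  finally show ?thesis by (simp add: B_def)
qed


theorem mainTheorem18:
  fixes c :: real and l :: nat
  assumes "c > 0" and "l \<ge> 4"
  defines "J \<equiv> {i \<in> {1..l}. Dd l i = 1}"
  shows "diamP c l (DP c l J) =
    (if even l then 1/2 * (B c l Dpsi Dpsi) powr (-1/2) * sqrt (real l)
     else sqrt 2 / 4 * (B c l Dpsi Dpsi) powr (-1/2) * sqrt (2 * real l - 1))"
proof -
  note c = assms(1) and l = assms(2)
  have l2: "l \<ge> 2" using l by simp
  have J: "J = {1, l-1, l}" using l unfolding J_def by (auto simp: Dd_def)
  define N where "N = (if even l then 2 * real l else 2 * real l - 1)"
  have psi: "B c l Dpsi Dpsi = 2 * c" using B_psi[OF l2, of c Dpsi] by (simp add: Dpsi_def eps_def)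
  have pw: "(2*c) powr (-1/2) = 1 / sqrt (2*c)"
    using c by (simp add: powr_minus_divide powr_half_sqrt)
  have rhs: "(if even l then 1/2 * (B c l Dpsi Dpsi) powr (-1/2) * sqrt (real l)
     else sqrt 2 / 4 * (B c l Dpsi Dpsi) powr (-1/2) * sqrt (2 * real l - 1)) = sqrt (N / (16*c))"
  proof (cases "even l")
    case True
    have "1/2 * (1 / sqrt (2*c)) * sqrt (real l) = sqrt (N / (16*c))"
    proof (rule real_sqrt_unique[symmetric])
      show "(1/2 * (1 / sqrt (2*c)) * sqrt (real l))^2 = N / (16*c)"
        using c True by (simp add: N_def power_mult_distrib power_divide field_simps)
      show "0 \<le> 1/2 * (1 / sqrt (2*c)) * sqrt (real l)" using c by simp
    qed
    then show ?thesis using True psi pw by simp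
  next
    case False
    have "sqrt 2 / 4 * (1 / sqrt (2*c)) * sqrt (2 * real l - 1) = sqrt (N / (16*c))"
    proof (rule real_sqrt_unique[symmetric])
      have "2 * real l - 1 \<ge> 0" using l by simp
      then show "(sqrt 2 / 4 * (1 / sqrt (2*c)) * sqrt (2 * real l - 1))^2 = N / (16*c)"
        using c False by (simp add: N_def power_mult_distrib power_divide field_simps)
      show "0 \<le> sqrt 2 / 4 * (1 / sqrt (2*c)) * sqrt (2 * real l - 1)" using c l by simp
    qed
    then show ?thesis using False psi pw by simp
  qed
  define m where "m = l div 2"
  define b where "b = (if even l then 0 else 1/(4*c))"
  have m: "2 \<le> m" "Suc m < l" using l unfolding m_def by auto
  have b: "0 \<le> b" "b \<le> 1/(2*c)" using c by (auto simp: b_def field_simps)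
  have ml: "real m = (if even l then real l / 2 else (real l - 1) / 2)"
    unfolding m_def by (cases "even l") (auto elim!: evenE oddE simp: field_simps)
  have s: "real m / (2*c) + b \<le> real l / (4*c)"
    using c ml by (cases "even l") (simp_all add: b_def field_simps)
  have win: "wit c m b \<in> DP c l J" using wit_in[OF c l m b s] J by simp
  have wB: "B c l (wit c m b) (wit c m b) = N / (16*c)"
  proof (cases "even l")
    case True then show ?thesis unfolding wit_B[OF m(2)] using c ml by (simp add: b_def N_def field_simps)
  next
    case False
    then have lm: "real l = 2 * real m + 1" using ml by simp
    show ?thesis unfolding wit_B[OF m(2)] lm using c False by (simp add: b_def N_def field_simps lm)
  qed
  have up: "B c l x x \<le> N / (16*c)" if "x \<in> DP c l J" for x
    using upper[OF c l, of x] that J c unfolding N_def by (simp add: field_simps)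
  have "diamP c l (DP c l J) = sqrt (N / (16*c))"
    unfolding diamP_def
  proof (rule Greatest_equality)
    show "sqrt (N / (16*c)) \<in> (\<lambda>x. sqrt (B c l x x)) ` DP c l J"
      using win wB by (intro image_eqI[of _ _ "wit c m b"]) auto
  next
    fix y assume "y \<in> (\<lambda>x. sqrt (B c l x x)) ` DP c l J"
    then obtain x where "x \<in> DP c l J" "y = sqrt (B c l x x)" by auto
    then show "y \<le> sqrt (N / (16*c))" using up by simp
  qed
  then show ?thesis using rhs by simp
qed

end
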